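(* Let $n\ge 1$ be an integer and $K=L=T=n^2$. For $r\in\{1,\ldots,n^2\}$ let $N(r)$ be the number of distinct integers in $\operatorname{Set}(\alpha)+\operatorname{Set}(\beta)$ for the $\mathsf{GASP}_r$ vectors $(\alpha,\beta)$ with these parameters. Then the minimum of $N(r)$ over $r\in\{1,\ldots,n^2\}$ is attained at $r=n$, and $N(n)=3$ if $n=1$, and $N(n)=n^4+2n^3+2n^2-n-2$ if $n\ge 2$.
   Context: For positive integers $K,L,T,r$ with $L\le K$ and $1\le r\le\min\{K,T\}$, the code $\mathsf{GASP}_r$ is given by the integer vectors $\alpha=(\alpha_{\mathrm p}\mid\alpha_{\mathrm s})$ and $\beta=(\beta_{\mathrm p}\mid\beta_{\mathrm s})$ (concatenations), where $\alpha_{\mathrm p}=(0,1,\ldots,K-1)$; $\alpha_{\mathrm s}$ is the vector of the $T$ smallest elements of $\{KL+j+Kt : 0\le j\le r-1,\ t\in\mathbb{Z}_{\ge 0}\}$ in increasing order; $\beta_{\mathrm p}=(0,K,\ldots,K(L-1))$; $\beta_{\mathrm s}=(KL,KL+1,\ldots,KL+T-1)$. $\operatorname{Set}(v)$ denotes the set of entries of $v$, and $A+B=\{a+b:a\in A,b\in B\}$. *)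

theory Defs
  imports Main
begin

definition smallest_elems :: "nat \<Rightarrow> nat set \<Rightarrow> nat set" where
  "smallest_elems T S = {x \<in> S. card {y \<in> S. y < x} < T}"

definition gasp_alpha_s :: "nat \<Rightarrow> nat \<Rightarrow> nat \<Rightarrow> nat \<Rightarrow> nat set" where
  "gasp_alpha_s K L T r =
     smallest_elems T {K * L + j + K * t | j t. j \<le> r - 1}"

definition gasp_alpha :: "nat \<Rightarrow> nat \<Rightarrow> nat \<Rightarrow> nat \<Rightarrow> nat set" where
  "gasp_alpha K L T r = {0..<K} \<union> gasp_alpha_s K L T r"

definition gasp_beta :: "nat \<Rightarrow> nat \<Rightarrow> nat \<Rightarrow> nat set" where
  "gasp_beta K L T = {K * l | l. l < L} \<union> {K * L ..< K * L + T}"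

definition sumset :: "nat set \<Rightarrow> nat set \<Rightarrow> nat set" where
  "sumset A B = {a + b | a b. a \<in> A \<and> b \<in> B}"

definition gasp_N :: "nat \<Rightarrow> nat \<Rightarrow> nat \<Rightarrow> nat \<Rightarrow> nat" where
  "gasp_N K L T r = card (sumset (gasp_alpha K L T r) (gasp_beta K L T))"

end

theory Submission
  imports Defs
begin

lemma memS: "(j::nat) < r \<Longrightarrow> m*m + m*t + j \<in> {m*m + j + m*t | j t. j \<le> r - 1}"
  by (rule CollectI, rule exI[of _ j], rule exI[of _ t]) auto

lemma memS_D: "x \<in> {m*m + j + m*t | j t. j \<le> r - 1} \<Longrightarrow> (1::nat) \<le> r \<Longrightarrow> \<exists>t j. x = m*m+m*t+j \<and> j < r"
proof -
  assume "x \<in> {m*m + j + m*t | j t. j \<le> r - 1}" "1 \<le> r"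
  then obtain j t where "x = m*m + j + m*t" "j \<le> r - 1" by auto
  then show ?thesis using \<open>1 \<le> r\<close> by (intro exI[of _ t] exI[of _ j]) auto
qed

lemma divmod_aux: "(j::nat) < m \<Longrightarrow> (m*t + j) div m = t \<and> (m*t+j) mod m = j"
  by auto

lemma lt_aux: assumes "(j::nat) < m" "j' < m" "m*t'+j' < m*t+j" shows "t' < t \<or> (t' = t \<and> j' < j)"
proof (cases "t' \<le> t")
  case True then show ?thesis using assms by (cases "t' = t") auto
next
  case False
  then have "m*(t+1) \<le> m*t'" by (intro mult_le_mono2) auto
  then show ?thesis using assms by auto
qed

lemma in_alpha_s:
  assumes "1 \<le> r" "r \<le> m" "t*r + j < m" "j < r"
  shows "m*m + m*t + j \<in> gasp_alpha_s m m m r"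
proof -
  let ?S = "{m*m + j + m*t | j t. j \<le> r - 1}"
  let ?x = "m*m + m*t + j"
  have xS: "?x \<in> ?S" using assms by (intro memS)
  have sub: "{y \<in> ?S. y < ?x} \<subseteq> (\<lambda>(t',j'). m*m+m*t'+j') ` ({..<t}\<times>{..<r}) \<union> (\<lambda>j'. m*m+m*t+j') ` {..<j}"
  proof
    fix y assume "y \<in> {y \<in> ?S. y < ?x}"
    then obtain t' j' where y: "y = m*m + m*t' + j'" "j' < r" "y < ?x" using assms(1) memS_D[of y m r] by auto
    then have "t' < t \<or> (t' = t \<and> j' < j)" using lt_aux[of j m j' t' t] assms by auto
    then show "y \<in> (\<lambda>(t',j'). m*m+m*t'+j') ` ({..<t}\<times>{..<r}) \<union> (\<lambda>j'. m*m+m*t+j') ` {..<j}"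
      using y by force
  qed
  have "card {y \<in> ?S. y < ?x} \<le> card ((\<lambda>(t',j'). m*m+m*t'+j') ` ({..<t}\<times>{..<r}) \<union> (\<lambda>j'. m*m+m*t+j') ` {..<j})"
    by (rule card_mono[OF _ sub]) auto
  also have "\<dots> \<le> card ((\<lambda>(t',j'). m*m+m*t'+j') ` ({..<t}\<times>{..<r})) + card ((\<lambda>j'. m*m+m*t+j') ` {..<j})"
    by (rule card_Un_le)
  also have "\<dots> \<le> card ({..<t}\<times>{..<r}) + card {..<j}"
    by (intro add_mono card_image_le) auto
  also have "\<dots> = t*r + j" by simp
  finally have "card {y \<in> ?S. y < ?x} < m" using assms by linarith
  then show ?thesis unfolding gasp_alpha_s_def smallest_elems_def using xS by blast
qed

lemma notin_alpha_s:
  assumes "x \<in> gasp_alpha_s m m m r" "A \<subseteq> {m*m + j + m*t | j t. j \<le> r - 1}" "\<forall>y\<in>A. y < x" "finite A" "card A \<ge> m"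
  shows False
proof -
  let ?S = "{m*m + j + m*t | j t. j \<le> r - 1}"
  have "A \<subseteq> {y \<in> ?S. y < x}" using assms by auto
  moreover have "finite {y \<in> ?S. y < x}" by (rule finite_subset[of _ "{..<x}"]) auto
  ultimately have "card A \<le> card {y \<in> ?S. y < x}" by (rule card_mono[rotated])
  moreover have "card {y \<in> ?S. y < x} < m" using assms(1) unfolding gasp_alpha_s_def smallest_elems_def by blast
  ultimately show False using assms by linarith
qed

lemma alpha_s_form:
  assumes "x \<in> gasp_alpha_s m m m r" "1 \<le> r"
  obtains t j where "x = m*m + m*t + j" "j < r"
  using assms memS_D[of x m r] unfolding gasp_alpha_s_def smallest_elems_def by blast

lemma inj_aux: "j < m \<Longrightarrow> j' < m \<Longrightarrow> m*t + j = m*t' + (j'::nat) \<Longrightarrow> t = t' \<and> j = j'"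
  by (metis divmod_aux)

lemma alpha_s_bound:
  assumes "x \<in> gasp_alpha_s m m m r" "1 \<le> r" "r \<le> m"
  obtains t j where "x = m*m + m*t + j" "j < r" "t < m"
proof -
  obtain t j where tj: "x = m*m + m*t + j" "j < r" using alpha_s_form assms by blast
  have "t < m"
  proof (rule ccontr)
    assume "\<not> t < m"
    let ?A = "(\<lambda>t'. m*m + m*t') ` {..<m}"
    have "?A \<subseteq> {m*m + j + m*t | j t. j \<le> r - 1}" using memS[of 0 r m] assms by auto
    moreover have "\<forall>y\<in>?A. y < x"
    proof
      fix y assume "y \<in> ?A"
      then obtain t' where "t' < m" "y = m*m+m*t'" by auto
      moreover have "m*t' < m*t" using \<open>t' < m\<close> \<open>\<not> t < m\<close> by (intro mult_strict_left_mono) auto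
      ultimately show "y < x" using tj by linarith
    qed
    moreover have "card ?A = m" by (subst card_image) (auto simp: inj_on_def)
    ultimately show False using notin_alpha_s[OF assms(1), of ?A] by auto
  qed
  then show ?thesis using tj that by blast
qed

lemma alpha_s_n:
  assumes "x \<in> gasp_alpha_s m m m n" "1 \<le> n" "m = n*n"
  obtains t j where "x = m*m + m*t + j" "j < n" "t < n"
proof -
  obtain t j where tj: "x = m*m + m*t + j" "j < n" using alpha_s_form assms by blast
  have "t < n"
  proof (rule ccontr)
    assume "\<not> t < n"
    let ?A = "(\<lambda>(t',j'). m*m + m*t' + j') ` ({..<n}\<times>{..<n})"
    have "?A \<subseteq> {m*m + j + m*t | j t. j \<le> n - 1}" using memS[of _ n m] by auto
    moreover have "\<forall>y\<in>?A. y < x"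
    proof
      fix y assume "y \<in> ?A"
      then obtain t' j' where "t' < n" "j' < n" "y = m*m+m*t'+j'" by auto
      moreover have "m*(t'+1) \<le> m*t" using \<open>t' < n\<close> \<open>\<not> t < n\<close> by (intro mult_le_mono2) auto
      moreover have "n \<le> m" using assms by auto
      moreover have "m*(t'+1) = m*t' + m" by simp
      ultimately show "y < x" using tj by linarith
    qed
    moreover have "card ?A = m"
    proof -
      have "n \<le> m" using assms by auto
      then have "inj_on (\<lambda>(t',j'). m*m + m*t' + j') ({..<n}\<times>{..<n})"
        unfolding inj_on_def
      proof (intro ballI impI)
        fix p p' assume h: "p \<in> {..<n}\<times>{..<n}" "p' \<in> {..<n}\<times>{..<n}"
          "(\<lambda>(t',j'). m*m + m*t' + j') p = (\<lambda>(t',j'). m*m + m*t' + j') p'"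
        obtain a b c d where pq: "p = (a,b)" "p' = (c,d)" by (cases p, cases p')
        have "b < m" "d < m" using h pq \<open>n \<le> m\<close> by auto
        moreover have "m*a + b = m*c + d" using h pq by simp
        ultimately show "p = p'" using inj_aux[of b m d a c] pq by auto
      qed
      then show ?thesis using assms by (simp add: card_image card_cartesian_product)
    qed
    ultimately show False using notin_alpha_s[OF assms(1), of ?A] by auto
  qed
  then show ?thesis using tj that by blast
qed


definition Dv :: "nat \<Rightarrow> nat \<Rightarrow> nat" where
  "Dv m r = (if m mod r = 0 then m*(m div r - 1) + r - 1 else m*(m div r) + m mod r - 1)"

definition X :: "nat \<Rightarrow> nat \<Rightarrow> nat set" where
  "X m r = {0..<m*m+2*m-1} \<union> (\<lambda>(u,j). m*m+m*u+j) ` ({2..<m}\<times>{..<r}) \<union> {2*m*m..<2*m*m+Dv m r+m}"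

lemma qr_facts:
  assumes "1 \<le> r" "r \<le> (m::nat)"
  shows "(m div r) * r + m mod r = m" "m div r \<ge> 1" "m mod r < r"
proof -
  show "(m div r) * r + m mod r = m" by simp
  have "r div r \<le> m div r" using assms by (intro div_le_mono)
  then show "m div r \<ge> 1" using assms by simp
  show "m mod r < r" using assms by simp
qed

lemma Dv_in:
  assumes "1 \<le> r" "r \<le> m"
  shows "m*m + Dv m r \<in> gasp_alpha_s m m m r"
proof -
  note f = qr_facts[OF assms]
  show ?thesis
  proof (cases "m mod r = 0")
    case True
    obtain q where q: "m div r = Suc q" using f(2) by (cases "m div r") auto
    have "Dv m r = m*q + (r - 1)" using True q assms unfolding Dv_def by simp
    moreover have "q*r + (r-1) < m" using f(1) True q assms by simp
    ultimately show ?thesis using in_alpha_s[OF assms, of q "r-1"] assms by (simp add: add.assoc)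
  next
    case False
    have "Dv m r = m*(m div r) + (m mod r - 1)" using False unfolding Dv_def by simp
    moreover have "(m div r)*r + (m mod r - 1) < m" using f(1) False by linarith
    ultimately show ?thesis using in_alpha_s[OF assms, of "m div r" "m mod r - 1"] f(3) by (simp add: add.assoc)
  qed
qed

lemma block_in:
  assumes "1 \<le> r" "r \<le> m" "w < Dv m r"
  shows "m*m + m*(w div m) \<in> gasp_alpha_s m m m r"
proof -
  note f = qr_facts[OF assms(1,2)]
  have mpos: "m > 0" using assms by auto
  have le: "m*(w div m) \<le> w" by (metis div_times_less_eq_dividend mult.commute)
  have "(w div m)*r + 0 < m"
  proof (cases "m mod r = 0")
    case True
    obtain q where q: "m div r = Suc q" using f(2) by (cases "m div r") auto
    have "w < m*q + m" using assms True q unfolding Dv_def by simp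
    then have "m*(w div m) < m*q + m" using le by linarith
    then have "m*(w div m) < m*(Suc q)" by simp
    then have "w div m < Suc q" using mult_less_cancel1 by blast
    then have "(w div m)*r \<le> q * r" by (intro mult_le_mono1) simp
    moreover have "r + q*r = m" using f(1) True q by simp
    ultimately show ?thesis using assms(1) by linarith
  next
    case False
    have "w < m*(m div r) + m" using assms False f(3) unfolding Dv_def by simp
    then have "m*(w div m) < m*(m div r) + m" using le by linarith
    then have "m*(w div m) < m*(Suc (m div r))" by simp
    then have "w div m < Suc (m div r)" using mult_less_cancel1 by blast
    then have "w div m \<le> m div r" by simp
    then have "(w div m)*r \<le> (m div r) * r" by (intro mult_le_mono1)
    then show ?thesis using f(1) False by linarith
  qed
  then show ?thesis using in_alpha_s[OF assms(1,2), of "w div m" 0] assms(1) by simp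
qed

lemma sumI: "a \<in> A \<Longrightarrow> b \<in> B \<Longrightarrow> x = a + b \<Longrightarrow> x \<in> sumset A B"
  unfolding sumset_def by blast

lemma beta_p: "l < L \<Longrightarrow> K*l \<in> gasp_beta K L T"
  unfolding gasp_beta_def by blast

lemma beta_s: "K*L \<le> b \<Longrightarrow> b < K*L+T \<Longrightarrow> b \<in> gasp_beta K L T"
  unfolding gasp_beta_def by auto

lemma alpha_p: "a < K \<Longrightarrow> a \<in> gasp_alpha K L T r"
  unfolding gasp_alpha_def by auto

lemma alpha_s: "a \<in> gasp_alpha_s K L T r \<Longrightarrow> a \<in> gasp_alpha K L T r"
  unfolding gasp_alpha_def by auto

lemma X_sub:
  assumes "1 \<le> r" "r \<le> m"
  shows "X m r \<subseteq> sumset (gasp_alpha m m m r) (gasp_beta m m m)"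
proof
  fix x assume "x \<in> X m r"
  then consider (a) "x < m*m+2*m-1" | (b) u j where "2 \<le> u" "u < m" "j < r" "x = m*m+m*u+j"
    | (c) "2*m*m \<le> x" "x < 2*m*m+Dv m r+m"
    unfolding X_def by auto
  then show "x \<in> sumset (gasp_alpha m m m r) (gasp_beta m m m)"
  proof cases
    case a
    show ?thesis
    proof (cases "x < m*m")
      case True
      have "x div m < m" using True by (simp add: less_mult_imp_div_less)
      moreover have "x mod m < m" using assms by simp
      ultimately show ?thesis
        by (intro sumI[of "x mod m" _ "m*(x div m)"] alpha_p beta_p) auto
    next
      case False
      show ?thesis
      proof (cases "x - m*m < m")
        case True
        then show ?thesis using False
          by (intro sumI[of "x - m*m" _ "m*m"] alpha_p beta_s) auto
      next
        case F2: False
        show ?thesis using False F2 a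
          by (intro sumI[of "m - 1" _ "x - (m-1)"] alpha_p beta_s) auto
      qed
    qed
  next
    case b
    have "m*m + m*0 + j \<in> gasp_alpha_s m m m r"
      using b assms by (intro in_alpha_s) auto
    then show ?thesis using b
      by (intro sumI[of "m*m+j" _ "m*u"] alpha_s beta_p) auto
  next
    case c
    define w where "w = x - 2*m*m"
    show ?thesis
    proof (cases "Dv m r \<le> w")
      case True
      show ?thesis using c True Dv_in[OF assms] unfolding w_def
        by (intro sumI[of "m*m + Dv m r" _ "x - (m*m + Dv m r)"] alpha_s beta_s) auto
    next
      case False
      have "m*(w div m) + w mod m = w" by simp
      moreover have "w mod m < m" using assms by simp
      moreover have "x = 2*m*m + w" using c w_def by simp
      ultimately show ?thesis using block_in[OF assms, of w] False
        by (intro sumI[of "m*m + m*(w div m)" _ "m*m + w mod m"] alpha_s beta_s) auto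
    qed
  qed
qed


lemma card_X:
  assumes "1 \<le> r" "r \<le> m"
  shows "card (X m r) = (m*m+2*m-1) + (m-2)*r + (Dv m r + m)"
proof -
  let ?A1 = "{0..<m*m+2*m-1}"
  let ?f = "\<lambda>(u,j). m*m+m*u+j"
  let ?A2 = "?f ` ({2..<m}\<times>{..<r})"
  let ?A3 = "{2*m*m..<2*m*m+Dv m r+m}"
  have inj: "inj_on ?f ({2..<m}\<times>{..<r})"
    unfolding inj_on_def
  proof (intro ballI impI)
    fix p p' assume h: "p \<in> {2..<m}\<times>{..<r}" "p' \<in> {2..<m}\<times>{..<r}" "?f p = ?f p'"
    obtain a b c d where pq: "p = (a,b)" "p' = (c,d)" by (cases p, cases p')
    have "b < m" "d < m" using h pq assms by auto
    moreover have "m*a + b = m*c + d" using h pq by simp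
    ultimately show "p = p'" using inj_aux[of b m d a c] pq by auto
  qed
  have c2: "card ?A2 = (m-2)*r" using card_image[OF inj] by (simp add: card_cartesian_product)
  have A2b: "y \<in> ?A2 \<Longrightarrow> m*m+2*m \<le> y \<and> y < 2*m*m" for y
  proof -
    assume "y \<in> ?A2"
    then obtain u j where uj: "2 \<le> u" "u < m" "j < r" "y = m*m+m*u+j" by auto
    have "m*2 \<le> m*u" using uj by (intro mult_le_mono2)
    moreover have "m*(u+1) \<le> m*m" using uj by (intro mult_le_mono2) simp
    moreover have "m*(u+1) = m*u + m" "m*2 = m + m" "2*m*m = m*m+m*m" by simp_all
    ultimately show ?thesis using uj assms by linarith
  qed
  have mm: "m*m+2*m-1 \<le> 2*m*m"
  proof -
    obtain k where "m = Suc k" using assms by (cases m) auto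
    then show ?thesis by (simp add: algebra_simps)
  qed
  have d12: "?A1 \<inter> ?A2 = {}" using A2b by fastforce
  have d3: "(?A1 \<union> ?A2) \<inter> ?A3 = {}" using A2b mm by fastforce
  have "card (X m r) = card (?A1 \<union> ?A2) + card ?A3"
    unfolding X_def by (rule card_Un_disjoint[OF _ _ d3]) auto
  also have "card (?A1 \<union> ?A2) = card ?A1 + card ?A2"
    by (rule card_Un_disjoint[OF _ _ d12]) auto
  finally show ?thesis using c2 by simp
qed

lemma X_A3: "2*m*m \<le> x \<Longrightarrow> x < 2*m*m + Dv m r + m \<Longrightarrow> x \<in> X m r"
  unfolding X_def by auto

lemma Dv_n: assumes "1 \<le> n" "m = n*n" shows "Dv m n = m*(n-1) + n - 1"
  using assms unfolding Dv_def by simp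

lemma sum_sub:
  assumes "1 \<le> n" "m = n*n"
  shows "sumset (gasp_alpha m m m n) (gasp_beta m m m) \<subseteq> X m n"
proof
  fix x assume "x \<in> sumset (gasp_alpha m m m n) (gasp_beta m m m)"
  then obtain a b where ab: "a \<in> gasp_alpha m m m n" "b \<in> gasp_beta m m m" "x = a + b"
    unfolding sumset_def by blast
  have nm: "n \<le> m" using assms by simp
  have D: "Dv m n = m*(n-1) + n - 1" by (rule Dv_n[OF assms])
  have "a < m \<or> a \<in> gasp_alpha_s m m m n" using ab(1) unfolding gasp_alpha_def by auto
  then have "a < m \<or> (\<exists>t j. a = m*m+m*t+j \<and> t < n \<and> j < n)"
    by (elim disjE) (auto elim: alpha_s_n[OF _ assms])
  then consider (p) "a < m" | (s) t j where "a = m*m+m*t+j" "t < n" "j < n"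
    by blast
  then show "x \<in> X m n"
  proof cases
    case p
    from ab(2) consider (bp) l where "b = m*l" "l < m" | (bs) "m*m \<le> b" "b < m*m+m"
      unfolding gasp_beta_def by auto
    then show ?thesis
    proof cases
      case bp
      have "m*(l+1) \<le> m*m" using bp by (intro mult_le_mono2) simp
      then have "x < m*m" using ab p bp by simp
      moreover have "1 \<le> m" using assms nm by simp
      ultimately have "x < m*m+2*m-1" by linarith
      then show ?thesis unfolding X_def by auto
    next
      case bs
      then show ?thesis using ab p unfolding X_def by auto
    qed
  next
    case s
    from ab(2) consider (bp) l where "b = m*l" "l < m" | (bs) "m*m \<le> b" "b < m*m+m"
      unfolding gasp_beta_def by auto
    then show ?thesis
    proof cases
      case bp
      have xe: "x = m*m + m*(t+l) + j" using ab s bp by (simp add: algebra_simps)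
      consider (u0) "t + l = 0" | (u1) "t + l = 1" | (u2) "2 \<le> t+l" "t+l < m" | (u3) "m \<le> t+l" by linarith
      then show ?thesis
      proof cases
        case u0
        then show ?thesis using xe s nm unfolding X_def by auto
      next
        case u1
        then have "2 \<le> n" using s bp assms by (cases "n = 1") auto
        then have "n*2 \<le> n*n" by (intro mult_le_mono2)
        then have "n + 2 \<le> m" using assms \<open>2 \<le> n\<close> by linarith
        then show ?thesis using xe s u1 unfolding X_def by auto
      next
        case u2
        then have "x \<in> (\<lambda>(u,j). m*m+m*u+j) ` ({2..<m}\<times>{..<n})" using xe s
          by (intro image_eqI[of _ _ "(t+l, j)"]) auto
        then show ?thesis unfolding X_def by blast
      next
        case u3
        have "t + l - m \<le> n - 1" using s bp by linarith
        then have "m*(t+l-m) \<le> m*(n-1)" by (intro mult_le_mono2)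
        moreover have "m*(t+l) = m*m + m*(t+l-m)" using u3
          by (metis add_diff_inverse_nat distrib_left not_less)
        moreover have "2*m*m = m*m+m*m" by simp
        moreover have "1 \<le> m" using nm assms by simp
        ultimately show ?thesis using xe s D by (intro X_A3) linarith+
      qed
    next
      case bs
      have "m*t \<le> m*(n-1)" using s by (intro mult_le_mono2) simp
      moreover have "2*m*m = m*m+m*m" by simp
      moreover have "1 \<le> m" using nm assms by simp
      ultimately show ?thesis using ab s bs D by (intro X_A3) linarith+
    qed
  qed
qed

lemma sumset_img: "sumset A B = (\<lambda>(a,b). a+b) ` (A \<times> B)"
  unfolding sumset_def by auto

lemma finite_sum:
  assumes "1 \<le> r" "r \<le> m"
  shows "finite (sumset (gasp_alpha m m m r) (gasp_beta m m m))"
proof -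
  have "gasp_alpha_s m m m r \<subseteq> {..<3*m*m}"
  proof
    fix x assume "x \<in> gasp_alpha_s m m m r"
    then obtain t j where tj: "x = m*m + m*t + j" "j < r" "t < m" using alpha_s_bound assms by blast
    have "m*(t+1) \<le> m*m" using tj by (intro mult_le_mono2) simp
    then show "x \<in> {..<3*m*m}" using tj assms by simp
  qed
  then have "finite (gasp_alpha m m m r)" unfolding gasp_alpha_def using finite_subset by auto
  moreover have "finite (gasp_beta m m m)" unfolding gasp_beta_def by auto
  ultimately show ?thesis unfolding sumset_img by auto
qed


lemma rE:
  assumes "1 \<le> r" "r \<le> m"
  shows "int r * int (Dv m r + m) \<ge> int m * int m + int r * (int r - 1)"
proof -
  note f = qr_facts[OF assms]
  show ?thesis
  proof (cases "m mod r = 0")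
    case True
    obtain q where q: "m div r = Suc q" using f(2) by (cases "m div r") auto
    have e: "Dv m r + m = m*q + (r - 1) + m" using True q assms unfolding Dv_def by simp
    have qr: "int q * int r + int r = int m" using f(1) True q
      by (metis add.commute add_0 mult_Suc of_nat_add of_nat_mult)
    have eqE: "int (Dv m r + m) = int m * int q + (int r - 1) + int m" using e assms by simp
    have "int r * int (Dv m r + m) = int m * (int q * int r + int r) + int r * (int r - 1)"
      unfolding eqE by (simp add: algebra_simps)
    then show ?thesis using qr by simp
  next
    case False
    let ?q = "int (m div r)" and ?s = "int (m mod r)" and ?m = "int m" and ?r = "int r"
    have e: "Dv m r + m = m*(m div r) + (m mod r - 1) + m" using False unfolding Dv_def by simp
    have E: "int (Dv m r + m) = ?m * ?q + (?s - 1) + ?m" using e False by simp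
    have qr: "?q * ?r + ?s = ?m" using f(1) by (metis of_nat_add of_nat_mult)
    have P: "(?m - ?r) * (?r - ?s) \<ge> 0" using assms f(3) by (intro mult_nonneg_nonneg) auto
    have "?r * int (Dv m r + m) - (?m * ?m + ?r * (?r - 1)) = (?m - ?r) * (?r - ?s) + ?m * (?q * ?r + ?s - ?m)"
      unfolding E by (simp add: algebra_simps)
    then show ?thesis using P qr by simp
  qed
qed

lemma P_nonneg:
  fixes N R :: int
  assumes "N \<ge> 2" "R \<ge> 1"
  shows "(R - N) * ((N*N - 1)*R - N*N*N) \<ge> 0"
proof (cases "R \<le> N")
  case True
  have "(N*N-1)*R \<le> (N*N-1)*N" using True assms by (intro mult_left_mono) auto
  moreover have "(N*N-1)*R = N*N*R - R" "(N*N-1)*N = N*N*N - N" by (simp_all add: algebra_simps)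
  ultimately have "(N*N - 1)*R - N*N*N \<le> 0" using assms by linarith
  then show ?thesis using True by (intro mult_nonpos_nonpos) auto
next
  case False
  have "(N*N-1)*(N+1) \<le> (N*N-1)*R" using False assms by (intro mult_left_mono) auto
  moreover have "N*2 \<le> N*N" using assms by (intro mult_left_mono) auto
  moreover have "(N*N-1)*R = N*N*R - R" "(N*N-1)*(N+1) = N*N*N + N*N - N - 1" by (simp_all add: algebra_simps)
  ultimately have "(N*N - 1)*R - N*N*N \<ge> 0" using assms by linarith
  then show ?thesis using False by (intro mult_nonneg_nonneg) auto
qed

lemma main_ineq:
  assumes "1 \<le> r" "r \<le> m" "m = n*n" "2 \<le> n"
  shows "(m-2)*n + Dv m n \<le> (m-2)*r + Dv m r"
proof -
  define N where "N = int n"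
  define R where "R = int r"
  define E where "E = int (Dv m r + m)"
  have m4: "4 \<le> m" using assms mult_le_mono[of 2 n 2 n] by simp
  have im: "int m = N*N" using assms N_def by simp
  have Dn: "int (Dv m n) = N*N*(N-1) + N - 1" using Dv_n[of n m] assms N_def im by (simp add: of_nat_diff)
  have rE': "R * E \<ge> N*N*(N*N) + R*(R-1)" using rE[OF assms(1,2)] R_def E_def im by simp
  have P: "(R - N) * ((N*N - 1)*R - N*N*N) \<ge> 0" using P_nonneg assms N_def R_def by simp
  define br where "br = (N*N-2)*R + E - N*N - ((N*N-2)*N + (N*N*(N-1) + N - 1))"
  have "R * br = (R - N) * ((N*N - 1)*R - N*N*N) + (R * E - (N*N*(N*N) + R*(R-1)))"
    unfolding br_def by (simp add: algebra_simps)
  then have "R * br \<ge> 0" using P rE' by linarith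
  moreover have "R > 0" using assms R_def by simp
  ultimately have "br \<ge> 0" by (simp add: zero_le_mult_iff)
  then have "int ((m-2)*n + Dv m n) \<le> int ((m-2)*r + Dv m r)"
    using m4 im Dn unfolding br_def E_def N_def R_def by (simp add: of_nat_diff)
  then show ?thesis by (simp only: of_nat_le_iff)
qed


theorem proposition1:
  fixes n :: nat
  assumes "n \<ge> 1"
  shows "(\<forall>r \<in> {1..n^2}. gasp_N (n^2) (n^2) (n^2) n \<le> gasp_N (n^2) (n^2) (n^2) r)
    \<and> (n = 1 \<longrightarrow> gasp_N (n^2) (n^2) (n^2) n = 3)
    \<and> (n \<ge> 2 \<longrightarrow> int (gasp_N (n^2) (n^2) (n^2) n)
           = int n^4 + 2 * int n^3 + 2 * int n^2 - int n - 2)"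
proof -
  define m where "m = n*n"
  have nm: "n^2 = m" unfolding m_def by (simp add: power2_eq_square)
  have m1: "1 \<le> m" using assms unfolding m_def by simp
  have n_le: "n \<le> m" using assms unfolding m_def by simp
  have Nn: "gasp_N m m m n = card (X m n)"
    unfolding gasp_N_def using X_sub[OF assms n_le] sum_sub[OF assms m_def] by (metis subset_antisym)
  have cXn: "card (X m n) = (m*m+2*m-1) + (m-2)*n + (Dv m n + m)" by (rule card_X[OF assms n_le])
  have part1: "\<forall>r \<in> {1..m}. gasp_N m m m n \<le> gasp_N m m m r"
  proof
    fix r assume r: "r \<in> {1..m}"
    then have r1: "1 \<le> r" "r \<le> m" by auto
    have "card (X m r) \<le> gasp_N m m m r"
      unfolding gasp_N_def by (rule card_mono[OF finite_sum[OF r1] X_sub[OF r1]])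
    moreover have "card (X m n) \<le> card (X m r)"
    proof (cases "n = 1")
      case True
      then have "m = 1" unfolding m_def by simp
      then have "r = n" using r1 True by simp
      then show ?thesis by simp
    next
      case False
      then have "2 \<le> n" using assms by simp
      then have "(m-2)*n + Dv m n \<le> (m-2)*r + Dv m r" using main_ineq[OF r1 m_def] by simp
      then show ?thesis unfolding cXn card_X[OF r1] by simp
    qed
    ultimately show "gasp_N m m m n \<le> gasp_N m m m r" using Nn by simp
  qed
  have part2: "n = 1 \<longrightarrow> gasp_N m m m n = 3"
  proof
    assume "n = 1"
    then have "m = 1" unfolding m_def by simp
    then show "gasp_N m m m n = 3" using Nn cXn \<open>n = 1\<close> unfolding Dv_def by simp
  qed
  have part3: "n \<ge> 2 \<longrightarrow> int (gasp_N m m m n) = int n^4 + 2 * int n^3 + 2 * int n^2 - int n - 2"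
  proof
    assume n2: "n \<ge> 2"
    have m4: "4 \<le> m" using n2 mult_le_mono[of 2 n 2 n] unfolding m_def by simp
    have im: "int m = int n * int n" unfolding m_def by simp
    have D: "int (Dv m n) = int m * (int n - 1) + int n - 1" using Dv_n[OF assms m_def] assms by (simp add: of_nat_diff)
    have "int (card (X m n)) = (int m * int m + 2 * int m - 1) + (int m - 2) * int n + (int (Dv m n) + int m)"
      unfolding cXn using m4 by (simp add: of_nat_diff)
    also have "\<dots> = int n^4 + 2 * int n^3 + 2 * int n^2 - int n - 2"
      unfolding D im by (simp add: algebra_simps power2_eq_square power3_eq_cube power4_eq_xxxx)
    finally show "int (gasp_N m m m n) = int n^4 + 2 * int n^3 + 2 * int n^2 - int n - 2" using Nn by simp
  qed
  show ?thesis unfolding nm using part1 part2 part3 by blast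
qed

end
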